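(* Let $F,G$ be two plane forests with $n$ vertices. Then $F\leq G$ if and only if $G$ is obtained from $F$ by a finite number of transformations, where a transformation of a plane forest at a vertex $s$ which is not a leaf is the following operation: let $c$ be the rightmost child of $s$; remove the edge from $s$ to $c$ (so that $c$ keeps its own subtree); if $s$ has a parent $p$, make $c$ a child of $p$ placed immediately to the right of $s$ among the children of $p$; if $s$ is a root, make $c$ a root placed immediately to the right of the tree of $s$. All other parts of the forest are unchanged.
   Context: A plane poset is a finite set with two partial orders $\leq_h,\leq_r$ such that two distinct elements are $\leq_h$-comparable iff they are not $\leq_r$-comparable, considered up to isomorphism. A plane forest is a plane poset which does not contain, as a plane subposet (subset with restricted orders), the plane poset $\{a,b,c\}$ with $a<_r b$, $a<_h c$, $b<_h c$. Equivalently, a plane forest is a finite rooted forest (roots at the bottom) in which the roots are linearly ordered from left to right and the children of each vertex are linearly ordered from left to right; $x\leq_h y$ iff $x$ is an ancestor of $y$ (or $x=y$), and for $\leq_h$-incomparable $x,y$, $x<_r y$ iff $x$ lies to the left of $y$. On a plane poset, $x\leq y$ iff ($x\leq_h y$ or $x\leq_r y$) is a total order (known fact). For plane posets $P,Q$ of the same cardinality, $\theta_{P,Q}$ is the increasing bijection $P\to Q$ for these total orders, and $P\leq Q$ means: for all $x,y\in P$, $\theta_{P,Q}(x)\leq_h\theta_{P,Q}(y)$ in $Q$ implies $x\leq_h y$ in $P$. *)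

theory Defs
  imports Main "HOL-Library.Sublist"
begin

text \<open>This representation is canonical, i.e. it represents plane forests up to isomorphism.\<close>

datatype ptree = Node (children: "ptree list")

type_synonym pforest = "ptree list"

text \<open>Vertices of a plane forest are addressed by nonempty paths of child indices:
  [i] is the i-th root, i # p is the vertex p inside the i-th tree's children forest.\<close>

inductive is_vertex :: "pforest \<Rightarrow> nat list \<Rightarrow> bool" where
  root: "i < length F \<Longrightarrow> is_vertex F [i]"
| sub:  "i < length F \<Longrightarrow> is_vertex (children (F ! i)) p \<Longrightarrow> is_vertex F (i # p)"

definition vertices :: "pforest \<Rightarrow> nat list set" where
  "vertices F = {p. is_vertex F p}"

text \<open>The two partial orders of the plane poset associated with a plane forest.
  x \<le>_h y iff x is an ancestor of y (or x = y), i.e. the path of x is a prefix of that of y.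
  For h-incomparable x, y: x <_r y iff x lies to the left of y.\<close>

definition h_le :: "nat list \<Rightarrow> nat list \<Rightarrow> bool" where
  "h_le x y \<longleftrightarrow> prefix x y"

definition r_lt :: "nat list \<Rightarrow> nat list \<Rightarrow> bool" where
  "r_lt x y \<longleftrightarrow> \<not> h_le x y \<and> \<not> h_le y x \<and>
     (\<exists>u a b v w. x = u @ a # v \<and> y = u @ b # w \<and> a < b)"

definition r_le :: "nat list \<Rightarrow> nat list \<Rightarrow> bool" where
  "r_le x y \<longleftrightarrow> x = y \<or> r_lt x y"

definition tot_le :: "nat list \<Rightarrow> nat list \<Rightarrow> bool" where
  "tot_le x y \<longleftrightarrow> h_le x y \<or> r_le x y"

text \<open>The relation P \<le> Q between plane forests of the same cardinality:
  theta is the increasing bijection for the total orders (unique, since these orders are total),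
  and theta(x) \<le>_h theta(y) in Q must imply x \<le>_h y in P.\<close>

definition forest_le :: "pforest \<Rightarrow> pforest \<Rightarrow> bool" where
  "forest_le P Q \<longleftrightarrow> card (vertices P) = card (vertices Q) \<and>
     (\<exists>\<theta>. bij_betw \<theta> (vertices P) (vertices Q) \<and>
          (\<forall>x\<in>vertices P. \<forall>y\<in>vertices P. tot_le x y \<longrightarrow> tot_le (\<theta> x) (\<theta> y)) \<and>
          (\<forall>x\<in>vertices P. \<forall>y\<in>vertices P. h_le (\<theta> x) (\<theta> y) \<longrightarrow> h_le x y))"

text \<open>One transformation at a non-leaf vertex s: its rightmost child c is detached (keeping
  its subtree) and inserted immediately to the right of s, among the siblings of s (the children
  of the parent of s, or the roots if s is a root).\<close>

inductive transform :: "pforest \<Rightarrow> pforest \<Rightarrow> bool" where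
  here: "i < length F \<Longrightarrow> F ! i = Node cs \<Longrightarrow> cs \<noteq> [] \<Longrightarrow>
         transform F (take i F @ Node (butlast cs) # last cs # drop (Suc i) F)"
| below: "i < length F \<Longrightarrow> F ! i = Node cs \<Longrightarrow> transform cs cs' \<Longrightarrow>
         transform F (F[i := Node cs'])"

end

theory Submission
  imports Defs "HOL-Library.List_Lexorder"
begin


lemma prefix_le: "prefix (x::nat list) y \<Longrightarrow> x \<le> y"
proof (induction x arbitrary: y)
  case (Cons a x) then show ?case by (cases y) auto
qed simp

lemma rlt_less: "(a::nat) < b \<Longrightarrow> u @ a # v < u @ b # w"
  by (induction u) auto

lemma le_tot: "(x::nat list) \<le> y \<Longrightarrow> tot_le x y"
proof (induction x arbitrary: y)
  case Nil then show ?case by (simp add: tot_le_def h_le_def)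
next
  case (Cons a x)
  then obtain b y' where y: "y = b # y'" by (cases y) auto
  show ?case
  proof (cases "a < b")
    case True
    then have "r_lt (a#x) y" unfolding r_lt_def h_le_def y
      apply (auto simp: prefix_Cons)
      apply (rule exI[of _ "[]"]) by auto
    then show ?thesis by (simp add: tot_le_def r_le_def)
  next
    case False
    with Cons.prems y have ab: "a = b" "x \<le> y'" by auto
    from Cons.IH[OF ab(2)] have "tot_le x y'" .
    then show ?thesis unfolding tot_le_def r_le_def r_lt_def h_le_def y ab
      apply (auto simp: prefix_Cons)
      subgoal for u a' b' v w
        apply (rule exI[of _ "b#u"]) by auto
      subgoal for u a' b' v w
        apply (rule exI[of _ "b#u"]) by auto
      done
  qed
qed

lemma tot_le_iff: "tot_le x y \<longleftrightarrow> (x::nat list) \<le> y"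
  using le_tot[of x y] prefix_le[of x y] rlt_less
  by (auto simp: tot_le_def r_le_def r_lt_def h_le_def intro: less_imp_le)

lemma convex: "(a::nat list) \<le> b \<Longrightarrow> b \<le> c \<Longrightarrow> prefix a c \<Longrightarrow> prefix a b"
proof (induction a arbitrary: b c)
  case Nil then show ?case by simp
next
  case (Cons x a)
  then obtain c' where c: "c = x # c'" by (cases c) auto
  from Cons.prems obtain y b' where b: "b = y # b'" by (cases b) auto
  from Cons.prems c b have "y = x" by auto
  with Cons.prems c b Cons.IH[of b' c'] show ?case by auto
qed



lemma is_vertex_Nil[simp]: "\<not> is_vertex F []"
  by (auto elim: is_vertex.cases)

lemma is_vertex_Cons: "is_vertex F (j#p) \<longleftrightarrow> j < length F \<and> (p = [] \<or> is_vertex (children (F!j)) p)"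
  by (auto elim: is_vertex.cases intro: is_vertex.intros)

lemma fsz_lt: "j < length F \<Longrightarrow> size_list size (children (F!j)) < size_list size F"
proof -
  assume j: "j < length F"
  have "size (F!j) = size_list size (children (F!j)) + 1" by (cases "F!j") auto
  moreover have "size (F!j) \<le> size_list size F"
    using j by (intro size_list_estimation') auto
  ultimately show ?thesis by simp
qed

lemma vertices_eq: "vertices F = (\<Union>j<length F. insert [j] (Cons j ` vertices (children (F!j))))"
  unfolding vertices_def
  apply (auto simp: is_vertex_Cons)
  subgoal for x by (cases x) (auto simp: is_vertex_Cons)
  done

lemma finite_vertices: "finite (vertices F)"
proof (induction F rule: measure_induct_rule[where f = "size_list size"])
  case (less F)
  show ?case unfolding vertices_eq[of F] using less fsz_lt by auto
qed

lemma vertices_inj: "vertices F = vertices G \<Longrightarrow> F = G"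
proof (induction F arbitrary: G rule: measure_induct_rule[where f = "size_list size"])
  case (less F)
  have len: "length F = length G"
  proof -
    have "\<And>j. j < length F \<longleftrightarrow> j < length G"
      using less.prems unfolding vertices_def
      by (metis is_vertex_Cons mem_Collect_eq)
    then show ?thesis by (metis linorder_neqE_nat less_irrefl)
  qed
  show ?case
  proof (rule nth_equalityI[OF len])
    fix j assume j: "j < length F"
    have "vertices (children (F!j)) = vertices (children (G!j))"
      using less.prems j len unfolding vertices_def
      apply (auto simp: set_eq_iff)
      subgoal for x by (drule spec[of _ "j#x"]) (auto simp: is_vertex_Cons)
      subgoal for x by (drule spec[of _ "j#x"]) (auto simp: is_vertex_Cons)
      done
    then have "children (F!j) = children (G!j)"
      using less.IH[OF fsz_lt[OF j]] by blast
    then show "F!j = G!j" by (metis ptree.collapse)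
  qed
qed

lemma vertex_parent: "is_vertex F (p@[k]) \<Longrightarrow> p \<noteq> [] \<Longrightarrow> is_vertex F p"
proof (induction p arbitrary: F)
  case (Cons a p) then show ?case by (cases "p = []") (auto simp: is_vertex_Cons)
qed simp

lemma vertex_sibling: "is_vertex F (p@[k]) \<Longrightarrow> k' \<le> k \<Longrightarrow> is_vertex F (p@[k'])"
proof (induction p arbitrary: F)
  case Nil then show ?case by (auto simp: is_vertex_Cons)
next
  case (Cons a p) then show ?case by (auto simp: is_vertex_Cons)
qed

fun node :: "pforest \<Rightarrow> nat list \<Rightarrow> ptree" where
  "node F [] = Node F"
| "node F [i] = F!i"
| "node F (i#j#s) = node (children (F!i)) (j#s)"

lemma vertex_snoc: "s \<noteq> [] \<Longrightarrow> is_vertex F (s@[k]) \<longleftrightarrow> is_vertex F s \<and> k < length (children (node F s))"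
proof (induction F s rule: node.induct)
  case (2 F i) then show ?case by (auto simp: is_vertex_Cons)
next
  case (3 F i j s) then show ?case by (auto simp: is_vertex_Cons)
qed simp



fun mv :: "nat list \<Rightarrow> pforest \<Rightarrow> pforest" where
  "mv [] F = F"
| "mv [i] F = take i F @ Node (butlast (children (F!i))) # last (children (F!i)) # drop (Suc i) F"
| "mv (i#j#s) F = F[i := Node (mv (j#s) (children (F!i)))]"

fun th :: "nat list \<Rightarrow> pforest \<Rightarrow> nat list \<Rightarrow> nat list" where
  "th [] F x = x"
| "th [i] F [] = []"
| "th [i] F (j#p) = (if j < i then j#p else if i < j then Suc j # p else
     (case p of [] \<Rightarrow> [i] | k#q \<Rightarrow> if Suc k = length (children (F!i)) then Suc i # q else i#k#q))"
| "th (i#j#s) F [] = []"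
| "th (i#j#s) F (a#p) = (if a = i then i # th (j#s) (children (F!i)) p else a#p)"

definition good :: "pforest \<Rightarrow> pforest \<Rightarrow> (nat list \<Rightarrow> nat list) \<Rightarrow> nat list \<Rightarrow> nat list \<Rightarrow> bool" where
  "good F F' \<phi> s c \<longleftrightarrow> bij_betw \<phi> (vertices F) (vertices F') \<and> \<phi> [] = [] \<and>
    (\<forall>x\<in>vertices F. \<forall>y\<in>vertices F. x \<le> y \<longrightarrow> \<phi> x \<le> \<phi> y) \<and>
    (\<forall>x\<in>vertices F. \<forall>y\<in>vertices F. prefix (\<phi> x) (\<phi> y) \<longrightarrow> prefix x y) \<and>
    (\<forall>x\<in>vertices F. \<forall>y\<in>vertices F. prefix x y \<longrightarrow> prefix (\<phi> x) (\<phi> y) \<or> (x = s \<and> prefix c y)) \<and>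
    \<not> prefix (\<phi> s) (\<phi> c) \<and> is_vertex F s \<and> is_vertex F c"

context
  fixes F :: pforest and i :: nat
  assumes i: "i < length F" and ne: "children (F!i) \<noteq> []"
begin

abbreviation "cs \<equiv> children (F!i)"
abbreviation "m \<equiv> length cs"
abbreviation "F' \<equiv> mv [i] F"

lemma m_pos: "0 < m" using ne by simp

lemma F'_len: "length F' = Suc (length F)" using i by simp

lemma F'_nth: "j < Suc (length F) \<Longrightarrow> F'!j = (if j < i then F!j else if j = i then Node (butlast cs)
   else if j = Suc i then last cs else F!(j - 1))"
  using i by (auto simp: nth_append min_def nth_Cons' Suc_diff_Suc numeral_2_eq_2)

lemma vF': "is_vertex F' (j#p) \<longleftrightarrow>
   (j < i \<and> is_vertex F (j#p)) \<or>
   (j = i \<and> (p = [] \<or> (\<exists>k q. p = k#q \<and> Suc k < m \<and> is_vertex F (i#p)))) \<or>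
   (j = Suc i \<and> is_vertex F (i#(m-1)#p)) \<or>
   (Suc i < j \<and> is_vertex F ((j-1)#p))"
proof (cases "j < i")
  case True then show ?thesis using i by (simp add: is_vertex_Cons F'_len F'_nth del: mv.simps)
next
  case False
  show ?thesis
  proof (cases "j = i")
    case True
    then show ?thesis using i m_pos
      by (cases p) (auto simp del: mv.simps simp: is_vertex_Cons F'_len F'_nth nth_butlast)
  next
    case False2: False
    show ?thesis
    proof (cases "j = Suc i")
      case True
      then show ?thesis using i m_pos
        by (auto simp del: mv.simps simp: is_vertex_Cons F'_len F'_nth last_conv_nth)
    next
      case False
      then show ?thesis using i m_pos \<open>\<not> j < i\<close> False2
        by (auto simp del: mv.simps simp: is_vertex_Cons F'_len F'_nth)
    qed
  qed
qed

lemma vF_i: "is_vertex F (i#k#q) \<longleftrightarrow> k < m \<and> (q = [] \<or> is_vertex (children (cs!k)) q)"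
  using i by (auto simp: is_vertex_Cons)

lemma sucm: "Suc k = m \<longleftrightarrow> k = m - 1" using m_pos by auto

definition ti :: "nat list \<Rightarrow> nat list" where
  "ti x = (case x of [] \<Rightarrow> [] | j#p \<Rightarrow> if j \<le> i then j#p else if j = Suc i then i#(m-1)#p else (j-1)#p)"

lemma vi: "is_vertex F [i]" using i by (simp add: is_vertex_Cons)

lemma th_in: "is_vertex F x \<Longrightarrow> is_vertex F' (th [i] F x) \<and> ti (th [i] F x) = x"
  apply (cases x)
   apply simp
  subgoal for j p
    apply (cases p)
    using i m_pos by (auto simp: vF' ti_def vF_i sucm simp del: mv.simps split: list.splits)
  done

lemma ti_in: "is_vertex F' y \<Longrightarrow> is_vertex F (ti y) \<and> th [i] F (ti y) = y"
  apply (cases y)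
   apply simp
  subgoal for j p
    apply (cases p)
    using i m_pos vi by (auto simp: vF' ti_def vF_i sucm simp del: mv.simps split: list.splits)
  done

lemma base_bij: "bij_betw (th [i] F) (vertices F) (vertices F')"
  apply (rule bij_betw_byWitness[where f' = ti])
  using th_in ti_in unfolding vertices_def by auto

lemma base_mono: "is_vertex F (j#p) \<Longrightarrow> is_vertex F (j'#p') \<Longrightarrow> j#p \<le> j'#p' \<Longrightarrow>
    th [i] F (j#p) \<le> th [i] F (j'#p')"
  apply (cases p; cases p')
  using i m_pos by (auto simp: vF_i sucm simp del: mv.simps split: list.splits)

lemma base_refl: "is_vertex F (j#p) \<Longrightarrow> is_vertex F (j'#p') \<Longrightarrow>
   prefix (th [i] F (j#p)) (th [i] F (j'#p')) \<Longrightarrow> prefix (j#p) (j'#p')"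
  apply (cases p; cases p')
  using i m_pos by (auto simp: vF_i sucm simp del: mv.simps split: list.splits if_splits)

lemma base_pres: "is_vertex F (j#p) \<Longrightarrow> is_vertex F (j'#p') \<Longrightarrow> prefix (j#p) (j'#p') \<Longrightarrow>
   prefix (th [i] F (j#p)) (th [i] F (j'#p')) \<or> (j#p = [i] \<and> prefix [i, m-1] (j'#p'))"
  apply (cases p; cases p')
  using i m_pos by (auto simp: vF_i sucm simp del: mv.simps split: list.splits if_splits)

lemma ex_cons: "is_vertex G x \<Longrightarrow> \<exists>j p. x = j#p" by (cases x) auto

lemma base_good: "good F F' (th [i] F) [i] [i, m-1]"
  unfolding good_def
proof (intro conjI)
  show "bij_betw (th [i] F) (vertices F) (vertices F')" by (rule base_bij)
  show "\<forall>x\<in>vertices F. \<forall>y\<in>vertices F. x \<le> y \<longrightarrow> th [i] F x \<le> th [i] F y"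
    unfolding vertices_def using base_mono by (metis ex_cons mem_Collect_eq)
  show "\<forall>x\<in>vertices F. \<forall>y\<in>vertices F. prefix (th [i] F x) (th [i] F y) \<longrightarrow> prefix x y"
    unfolding vertices_def using base_refl by (metis ex_cons mem_Collect_eq)
  show "\<forall>x\<in>vertices F. \<forall>y\<in>vertices F. prefix x y \<longrightarrow> prefix (th [i] F x) (th [i] F y) \<or> (x = [i] \<and> prefix [i, m-1] y)"
    unfolding vertices_def using base_pres by (metis ex_cons mem_Collect_eq)
  show "\<not> prefix (th [i] F [i]) (th [i] F [i, m-1])" using m_pos by (simp add: sucm)
  show "is_vertex F [i]" by (rule vi)
  show "is_vertex F [i, m-1]" using m_pos by (simp add: vF_i)
qed simp

end


definition liftf :: "nat \<Rightarrow> (nat list \<Rightarrow> nat list) \<Rightarrow> nat list \<Rightarrow> nat list" where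
  "liftf i \<phi> x = (case x of [] \<Rightarrow> [] | a#p \<Rightarrow> if a = i then i # \<phi> p else a#p)"

lemma liftf_simps[simp]: "liftf i \<phi> [] = []" "liftf i \<phi> (a#p) = (if a = i then i # \<phi> p else a#p)"
  by (auto simp: liftf_def)

lemma vupd: "i < length F \<Longrightarrow> is_vertex (F[i := Node cs']) (a#p) \<longleftrightarrow>
   a < length F \<and> (p = [] \<or> is_vertex (if a = i then cs' else children (F!a)) p)"
  by (auto simp: is_vertex_Cons)

lemma ex_cons2: "is_vertex G x \<Longrightarrow> \<exists>j p. x = j#p" by (cases x) auto

lemma ball1: "(\<And>a p. is_vertex G (a#p) \<Longrightarrow> P (a#p)) \<Longrightarrow> \<forall>x\<in>vertices G. P x"
  unfolding vertices_def by (metis ex_cons2 mem_Collect_eq)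

lemma ball2: assumes h: "(\<And>a p b q. is_vertex G (a#p) \<Longrightarrow> is_vertex G (b#q) \<Longrightarrow> P (a#p) (b#q))" shows "\<forall>x\<in>vertices G. \<forall>y\<in>vertices G. P x y"
proof (intro ballI)
  fix x y assume "x \<in> vertices G" "y \<in> vertices G"
  then obtain a p b q where "x = a#p" "y = b#q" "is_vertex G (a#p)" "is_vertex G (b#q)"
    unfolding vertices_def using ex_cons2 by blast
  then show "P x y" using h by simp
qed

lemma lift_good:
  assumes i: "i < length F" and g: "good (children (F!i)) cs' \<phi> s c"
  shows "good F (F[i := Node cs']) (liftf i \<phi>) (i#s) (i#c)"
proof -
  define cs where "cs = children (F!i)"
  define F' where "F' = F[i := Node cs']"
  from g have g: "good cs cs' \<phi> s c" by (simp add: cs_def)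
  have gg: "bij_betw \<phi> (vertices cs) (vertices cs') \<and> \<phi> [] = [] \<and>
    (\<forall>x\<in>vertices cs. \<forall>y\<in>vertices cs. x \<le> y \<longrightarrow> \<phi> x \<le> \<phi> y) \<and>
    (\<forall>x\<in>vertices cs. \<forall>y\<in>vertices cs. prefix (\<phi> x) (\<phi> y) \<longrightarrow> prefix x y) \<and>
    (\<forall>x\<in>vertices cs. \<forall>y\<in>vertices cs. prefix x y \<longrightarrow> prefix (\<phi> x) (\<phi> y) \<or> (x = s \<and> prefix c y)) \<and>
    \<not> prefix (\<phi> s) (\<phi> c) \<and> is_vertex cs s \<and> is_vertex cs c"
    using g unfolding good_def .
  note gg' = conjunct1[OF gg] conjunct1[OF conjunct2[OF gg]] conjunct1[OF conjunct2[OF conjunct2[OF gg]]]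
    conjunct1[OF conjunct2[OF conjunct2[OF conjunct2[OF gg]]]]
    conjunct1[OF conjunct2[OF conjunct2[OF conjunct2[OF conjunct2[OF gg]]]]]
    conjunct1[OF conjunct2[OF conjunct2[OF conjunct2[OF conjunct2[OF conjunct2[OF gg]]]]]]
    conjunct1[OF conjunct2[OF conjunct2[OF conjunct2[OF conjunct2[OF conjunct2[OF conjunct2[OF gg]]]]]]]
    conjunct2[OF conjunct2[OF conjunct2[OF conjunct2[OF conjunct2[OF conjunct2[OF conjunct2[OF gg]]]]]]]
  note bij = gg'(1) and phi0 = gg'(2) and M = gg'(3) and R = gg'(4) and P = gg'(5) and ns = gg'(6)
    and vs = gg'(7) and vc = gg'(8)
  have vF': "is_vertex F' (a#p) \<longleftrightarrow> a < length F \<and> (p = [] \<or> is_vertex (if a = i then cs' else children (F!a)) p)" for a p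
    unfolding F'_def using vupd[OF i] by simp
  have vF: "is_vertex F (a#p) \<longleftrightarrow> a < length F \<and> (p = [] \<or> is_vertex (if a = i then cs else children (F!a)) p)" for a p
    by (auto simp: is_vertex_Cons cs_def)
  have phiV: "is_vertex cs p \<Longrightarrow> is_vertex cs' (\<phi> p)" for p
    using bij by (auto simp: vertices_def dest: bij_betwE)
  define \<psi> where "\<psi> p = (if p = [] then [] else inv_into (vertices cs) \<phi> p)" for p
  have psiV: "is_vertex cs' p \<Longrightarrow> is_vertex cs (\<psi> p) \<and> \<phi> (\<psi> p) = p" for p
    using bij unfolding \<psi>_def vertices_def
    by (auto simp: bij_betw_inv_into_right intro!: inv_into_into[of p \<phi> "Collect (is_vertex cs)", simplified]
        dest: bij_betw_imp_surj_on)
  have phine: "is_vertex cs p \<Longrightarrow> \<phi> p \<noteq> []" for p using phiV by fastforce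
  have phipsi: "is_vertex cs p \<Longrightarrow> \<psi> (\<phi> p) = p" for p
    using bij phine unfolding \<psi>_def vertices_def
    by (auto simp: bij_betw_inv_into_left)
  have psi0: "\<psi> [] = []" by (simp add: \<psi>_def)
  have B: "bij_betw (liftf i \<phi>) (vertices F) (vertices F')"
  proof (rule bij_betw_byWitness[where f' = "liftf i \<psi>"])
    show "\<forall>a\<in>vertices F. liftf i \<psi> (liftf i \<phi> a) = a"
      by (rule ball1) (auto simp: vF phi0 phipsi psi0)
    show "\<forall>a\<in>vertices F'. liftf i \<phi> (liftf i \<psi> a) = a"
      by (rule ball1) (auto simp: vF' phi0 psiV psi0)
    show "liftf i \<phi> ` vertices F \<subseteq> vertices F'"
    proof -
      have "\<forall>x\<in>vertices F. liftf i \<phi> x \<in> vertices F'"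
        by (rule ball1) (auto simp: vF vF' phi0 phiV vertices_def)
      then show ?thesis by blast
    qed
    show "liftf i \<psi> ` vertices F' \<subseteq> vertices F"
    proof -
      have "\<forall>x\<in>vertices F'. liftf i \<psi> x \<in> vertices F"
        by (rule ball1) (auto simp: vF vF' psiV psi0 vertices_def)
      then show ?thesis by blast
    qed
  qed
  have M': "is_vertex cs x \<Longrightarrow> is_vertex cs y \<Longrightarrow> x \<le> y \<Longrightarrow> \<phi> x \<le> \<phi> y" for x y
    using M by (auto simp: vertices_def)
  have R': "is_vertex cs x \<Longrightarrow> is_vertex cs y \<Longrightarrow> prefix (\<phi> x) (\<phi> y) \<Longrightarrow> prefix x y" for x y
    using R by (auto simp: vertices_def)
  have P': "is_vertex cs x \<Longrightarrow> is_vertex cs y \<Longrightarrow> prefix x y \<Longrightarrow> \<not> prefix (\<phi> x) (\<phi> y) \<Longrightarrow> x = s \<and> prefix c y" for x y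
    using P by (auto simp: vertices_def)
  show ?thesis
    unfolding good_def F'_def[symmetric]
  proof (intro conjI B)
    show "liftf i \<phi> [] = []" by simp
    show "\<forall>x\<in>vertices F. \<forall>y\<in>vertices F. x \<le> y \<longrightarrow> liftf i \<phi> x \<le> liftf i \<phi> y"
      using M' phine by (intro ball2) (auto simp: vF phi0 vertices_def)
    show "\<forall>x\<in>vertices F. \<forall>y\<in>vertices F. prefix (liftf i \<phi> x) (liftf i \<phi> y) \<longrightarrow> prefix x y"
      using R' phine by (intro ball2) (auto simp: vF phi0 vertices_def)
    show "\<forall>x\<in>vertices F. \<forall>y\<in>vertices F. prefix x y \<longrightarrow> prefix (liftf i \<phi> x) (liftf i \<phi> y) \<or> (x = i#s \<and> prefix (i#c) y)"
      using P' phine by (intro ball2) (auto simp: vF phi0 vertices_def)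
    show "\<not> prefix (liftf i \<phi> (i # s)) (liftf i \<phi> (i # c))" using ns by simp
    show "is_vertex F (i # s)" "is_vertex F (i # c)" using vs vc i by (auto simp: vF)
  qed
qed



lemma th_lift: "th (i#j#s) F = liftf i (th (j#s) (children (F!i)))"
proof
  fix x show "th (i#j#s) F x = liftf i (th (j#s) (children (F!i))) x" by (cases x) auto
qed

lemma mv_good: "is_vertex F s \<Longrightarrow> children (node F s) \<noteq> [] \<Longrightarrow>
  good F (mv s F) (th s F) s (s @ [length (children (node F s)) - 1]) \<and> transform F (mv s F)"
proof (induction s F rule: mv.induct)
  case (1 F) then show ?case by simp
next
  case (2 i F)
  then have i: "i < length F" by (simp add: is_vertex_Cons)
  have "good F (mv [i] F) (th [i] F) [i] [i, length (children (F!i)) - 1]"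
    using base_good[OF i] 2 by simp
  moreover have "transform F (mv [i] F)"
    using transform.here[OF i, of "children (F!i)"] 2 by simp
  ultimately show ?case by simp
next
  case (3 i j s F)
  from "3.prems" have i: "i < length F" and v: "is_vertex (children (F!i)) (j#s)"
    by (auto simp: is_vertex_Cons)
  from "3.prems" have ne: "children (node (children (F!i)) (j#s)) \<noteq> []" by simp
  from "3.IH"[OF v ne] have g: "good (children (F!i)) (mv (j#s) (children (F!i))) (th (j#s) (children (F!i))) (j#s)
     ((j#s) @ [length (children (node (children (F!i)) (j#s))) - 1])"
    and t: "transform (children (F!i)) (mv (j#s) (children (F!i)))" by auto
  have "good F (mv (i#j#s) F) (th (i#j#s) F) (i#j#s) (i # ((j#s) @ [length (children (node (children (F!i)) (j#s))) - 1]))"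
    using lift_good[OF i g] by (simp add: th_lift)
  moreover have "transform F (mv (i#j#s) F)"
    using transform.below[OF i _ t] by simp
  ultimately show ?case by simp
qed

lemma transform_mv: "transform F G \<Longrightarrow> \<exists>s. is_vertex F s \<and> children (node F s) \<noteq> [] \<and> G = mv s F"
proof (induction rule: transform.induct)
  case (here i F cs)
  then show ?case by (intro exI[of _ "[i]"]) (auto simp: is_vertex_Cons)
next
  case (below i F cs cs')
  then obtain s where s: "is_vertex cs s" "children (node cs s) \<noteq> []" "cs' = mv s cs" by blast
  then obtain j s' where js: "s = j#s'" by (cases s) auto
  show ?case
    apply (intro exI[of _ "i#j#s'"])
    using below s js by (auto simp: is_vertex_Cons)
qed



lemma vertex_prefix: "is_vertex F x \<Longrightarrow> prefix r x \<Longrightarrow> r \<noteq> [] \<Longrightarrow> is_vertex F r"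
proof (induction x rule: rev_induct)
  case Nil then show ?case by simp
next
  case (snoc a x)
  show ?case
  proof (cases "r = x @ [a]")
    case True then show ?thesis using snoc by simp
  next
    case False
    then have "prefix r x" using snoc.prems by (simp add: prefix_snoc)
    moreover have "x \<noteq> []" using \<open>prefix r x\<close> snoc.prems(3) by auto
    ultimately show ?thesis using snoc vertex_parent by blast
  qed
qed

lemma L2: "(p@[k]::nat list) < z \<Longrightarrow> z < p@[Suc k] \<Longrightarrow> prefix (p@[k]) z"
proof (induction p arbitrary: z)
  case Nil then show ?case by (cases z) auto
next
  case (Cons a p) then show ?case by (cases z) auto
qed

lemma L3: "w \<noteq> [] \<Longrightarrow> (p@[0]::nat list) \<le> p@w"
  by (induction p) (cases w; auto)+

lemma snoc_less: "(k::nat) < j \<Longrightarrow> p@[k] < p@[j]"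
  using rlt_less[of k j p "[]" "[]"] by simp

lemma snoc_less_iff: "(p@[k]::nat list) < p@[j] \<longleftrightarrow> k < j"
  by (induction p) auto

lemma iso_id:
  assumes bij: "bij_betw \<theta> (vertices F) (vertices G)"
  and mono: "\<forall>x\<in>vertices F. \<forall>y\<in>vertices F. x \<le> y \<longrightarrow> \<theta> x \<le> \<theta> y"
  and pres: "\<forall>x\<in>vertices F. \<forall>y\<in>vertices F. prefix x y \<longrightarrow> prefix (\<theta> x) (\<theta> y)"
  and refl: "\<forall>x\<in>vertices F. \<forall>y\<in>vertices F. prefix (\<theta> x) (\<theta> y) \<longrightarrow> prefix x y"
  shows "\<forall>x\<in>vertices F. \<theta> x = x"
proof -
  have inV: "is_vertex F x \<Longrightarrow> is_vertex G (\<theta> x)" for x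
    using bij by (auto simp: vertices_def dest: bij_betwE)
  have surj: "is_vertex G w \<Longrightarrow> \<exists>z. is_vertex F z \<and> \<theta> z = w" for w
    using bij unfolding vertices_def bij_betw_def by (metis (no_types, lifting) imageE mem_Collect_eq)
  have inj: "is_vertex F x \<Longrightarrow> is_vertex F y \<Longrightarrow> \<theta> x = \<theta> y \<Longrightarrow> x = y" for x y
    using bij unfolding vertices_def bij_betw_def inj_on_def by auto
  have mono': "is_vertex F x \<Longrightarrow> is_vertex F y \<Longrightarrow> x \<le> y \<Longrightarrow> \<theta> x \<le> \<theta> y" for x y
    using mono by (auto simp: vertices_def)
  have smono: "is_vertex F x \<Longrightarrow> is_vertex F y \<Longrightarrow> \<theta> x < \<theta> y \<Longrightarrow> x < y" for x y
  proof (rule ccontr)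
    assume a: "is_vertex F x" "is_vertex F y" "\<theta> x < \<theta> y" "\<not> x < y"
    then have "y \<le> x" by simp
    then have "\<theta> y \<le> \<theta> x" using mono' a by simp
    then show False using a by simp
  qed
  have pres': "is_vertex F x \<Longrightarrow> is_vertex F y \<Longrightarrow> prefix x y \<Longrightarrow> prefix (\<theta> x) (\<theta> y)" for x y
    using pres by (auto simp: vertices_def)
  have refl': "is_vertex F x \<Longrightarrow> is_vertex F y \<Longrightarrow> prefix (\<theta> x) (\<theta> y) \<Longrightarrow> prefix x y" for x y
    using refl by (auto simp: vertices_def)
  have main: "is_vertex F (p@[k]) \<Longrightarrow> \<theta> (p@[k]) = p@[k]" for p k
  proof (induction "length p" arbitrary: p k rule: less_induct)
    case less
    have OIH: "prefix r p \<Longrightarrow> r \<noteq> [] \<Longrightarrow> \<theta> r = r" for r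
    proof -
      assume r: "prefix r p" "r \<noteq> []"
      then have vr: "is_vertex F r" using vertex_prefix[OF less.prems] by (meson prefix_append)
      obtain r' a where ra: "r = r' @ [a]" using r(2) by (cases r rule: rev_cases) auto
      have "length r' < length p" using r ra prefix_length_le by fastforce
      then show ?thesis using less.hyps[of r' a] vr ra by simp
    qed
    show ?case using less.prems
    proof (induction k)
      case 0
      define t where "t = \<theta> (p@[0])"
      have vt: "is_vertex G t" using inV 0 t_def by simp
      show ?case
      proof (cases "p = []")
        case True
        obtain c w where cw: "t = c # w" using vt by (cases t) auto
        have "is_vertex G [c]" using vertex_prefix[OF vt, of "[c]"] cw by simp
        then have "is_vertex G [0]" using vertex_sibling[of G "[]" c 0] by simp
        then obtain z where z: "is_vertex F z" "\<theta> z = [0]" using surj by blast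
        have "[0] \<le> z" using z(1) by (cases z) auto
        then have "t \<le> [0]" using mono'[OF 0 z(1)] z True t_def by simp
        moreover have "[0] \<le> t" using cw by auto
        ultimately show ?thesis using True t_def by simp
      next
        case False
        have vp: "is_vertex F p" using vertex_parent 0 False by blast
        have tp: "\<theta> p = p" using OIH[of p] False by simp
        have "prefix (\<theta> p) t" using pres'[OF vp 0] t_def by simp
        then obtain w where tw: "t = p @ w" using tp by (auto simp: prefix_def)
        have "w \<noteq> []" using tw tp inj[OF vp 0] t_def by auto
        then obtain c w' where cw: "w = c # w'" by (cases w) auto
        have "is_vertex G (p@[c])" using vertex_prefix[OF vt, of "p@[c]"] tw cw by simp
        then have "is_vertex G (p@[0])" using vertex_sibling by blast
        then obtain z where z: "is_vertex F z" "\<theta> z = p@[0]" using surj by blast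
        have "prefix p z" using refl'[OF vp z(1)] z tp by simp
        then obtain w2 where zw: "z = p @ w2" by (auto simp: prefix_def)
        have "w2 \<noteq> []" using zw z tp by auto
        then have "p@[0] \<le> z" using zw L3 by simp
        then have "t \<le> p@[0]" using mono'[OF 0 z(1)] z t_def by simp
        moreover have "p@[0] \<le> t" using tw L3 \<open>w \<noteq> []\<close> by simp
        ultimately show ?thesis using t_def by simp
      qed
    next
      case (Suc k')
      have vy: "is_vertex F (p@[k'])" using vertex_sibling[OF Suc.prems, of k'] by simp
      have ty: "\<theta> (p@[k']) = p@[k']" using Suc.IH[OF vy] .
      define t where "t = \<theta> (p@[Suc k'])"
      have vt: "is_vertex G t" using inV Suc.prems t_def by simp
      have tne: "t \<noteq> []" using vt by auto
      have A: "\<exists>j. t = p @ [j]"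
      proof -
        obtain r j where rj: "t = r @ [j]" using tne by (cases t rule: rev_cases) auto
        have pr: "prefix r p"
        proof (cases "r = []")
          case True then show ?thesis by simp
        next
          case False
          have "is_vertex G r" using vertex_parent vt rj False by blast
          then obtain z where z: "is_vertex F z" "\<theta> z = r" using surj by blast
          have "prefix z (p@[Suc k'])" using refl'[OF z(1) Suc.prems] z rj t_def by simp
          moreover have "z \<noteq> p@[Suc k']" using z rj t_def by auto
          ultimately have "prefix z p" by (simp add: prefix_snoc)
          moreover have "z \<noteq> []" using z by auto
          ultimately show ?thesis using OIH z by simp
        qed
        show ?thesis
        proof (cases "p = []")
          case True then show ?thesis using pr rj by simp
        next
          case False
          have vp: "is_vertex F p" using vertex_parent Suc.prems False by blast
          have tp: "\<theta> p = p" using OIH[of p] False by simp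
          have "prefix p t" using pres'[OF vp Suc.prems] t_def tp by simp
          moreover have "t \<noteq> p" using inj[OF vp Suc.prems] tp t_def by auto
          ultimately have "prefix p r" using rj by (simp add: prefix_snoc)
          then have "r = p" using pr prefix_order.antisym by blast
          then show ?thesis using rj by simp
        qed
      qed
      then obtain j where tj: "t = p @ [j]" by blast
      have "p@[k'] < p@[Suc k']" by (simp add: snoc_less)
      then have "\<theta> (p@[k']) \<le> t" using mono'[OF vy Suc.prems] t_def by simp
      moreover have "\<theta> (p@[k']) \<noteq> t" using inj[OF vy Suc.prems] t_def by auto
      ultimately have "p@[k'] < p@[j]" using ty tj by (simp add: order.strict_iff_order)
      then have kj: "k' < j" by (simp add: snoc_less_iff)
      have "j = Suc k'"
      proof (rule ccontr)
        assume "j \<noteq> Suc k'"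
        then have kj2: "Suc k' < j" using kj by simp
        have "is_vertex G (p@[Suc k'])" using vertex_sibling[of G p j "Suc k'"] vt tj kj2 by simp
        then obtain z where z: "is_vertex F z" "\<theta> z = p@[Suc k']" using surj by blast
        have "\<theta> (p@[k']) < \<theta> z" using ty z snoc_less by simp
        then have "p@[k'] < z" using smono[OF vy z(1)] by simp
        moreover have "\<theta> z < t" using z tj kj2 snoc_less by simp
        then have "z < p@[Suc k']" using smono[OF z(1) Suc.prems] t_def by simp
        ultimately have "prefix (p@[k']) z" using L2 by blast
        then have "prefix (\<theta> (p@[k'])) (\<theta> z)" using pres'[OF vy z(1)] by simp
        then show False using ty z by (simp add: prefix_def)
      qed
      then show ?case using tj t_def by simp
    qed
  qed
  show ?thesis
  proof
    fix x assume "x \<in> vertices F"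
    then have vx: "is_vertex F x" by (simp add: vertices_def)
    then obtain p k where "x = p@[k]" by (cases x rule: rev_cases) auto
    then show "\<theta> x = x" using main vx by simp
  qed
qed



definition PP :: "pforest \<Rightarrow> (nat list \<times> nat list) set" where
  "PP F = {(x,y). x \<in> vertices F \<and> y \<in> vertices F \<and> prefix x y}"

lemma finite_PP: "finite (PP F)"
proof -
  have "PP F \<subseteq> vertices F \<times> vertices F" by (auto simp: PP_def)
  then show ?thesis using finite_vertices by (meson finite_SigmaI rev_finite_subset)
qed

lemma dir1: "transform\<^sup>*\<^sup>* F G \<Longrightarrow> \<exists>\<theta>. bij_betw \<theta> (vertices F) (vertices G) \<and>
   (\<forall>x\<in>vertices F. \<forall>y\<in>vertices F. x \<le> y \<longrightarrow> \<theta> x \<le> \<theta> y) \<and>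
   (\<forall>x\<in>vertices F. \<forall>y\<in>vertices F. prefix (\<theta> x) (\<theta> y) \<longrightarrow> prefix x y)"
proof (induction rule: rtranclp_induct)
  case base
  show ?case by (intro exI[of _ id]) (auto simp: bij_betw_def)
next
  case (step G H)
  from step.IH obtain \<theta> where th: "bij_betw \<theta> (vertices F) (vertices G)"
    "\<forall>x\<in>vertices F. \<forall>y\<in>vertices F. x \<le> y \<longrightarrow> \<theta> x \<le> \<theta> y"
    "\<forall>x\<in>vertices F. \<forall>y\<in>vertices F. prefix (\<theta> x) (\<theta> y) \<longrightarrow> prefix x y" by blast
  from transform_mv[OF step.hyps(2)] obtain s where s: "is_vertex G s" "children (node G s) \<noteq> []" "H = mv s G"
    by blast
  from mv_good[OF s(1,2)] have g: "good G H (th s G) s (s @ [length (children (node G s)) - 1])"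
    using s(3) by simp
  then have gb: "bij_betw (th s G) (vertices G) (vertices H)"
    and gm: "\<forall>x\<in>vertices G. \<forall>y\<in>vertices G. x \<le> y \<longrightarrow> th s G x \<le> th s G y"
    and gr: "\<forall>x\<in>vertices G. \<forall>y\<in>vertices G. prefix (th s G x) (th s G y) \<longrightarrow> prefix x y"
    unfolding good_def by blast+
  have img: "x \<in> vertices F \<Longrightarrow> \<theta> x \<in> vertices G" for x using th(1) by (auto dest: bij_betwE)
  show ?case
  proof (intro exI[of _ "th s G \<circ> \<theta>"] conjI)
    show "bij_betw (th s G \<circ> \<theta>) (vertices F) (vertices H)" using bij_betw_trans[OF th(1) gb] .
    show "\<forall>x\<in>vertices F. \<forall>y\<in>vertices F. x \<le> y \<longrightarrow> (th s G \<circ> \<theta>) x \<le> (th s G \<circ> \<theta>) y"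
      using th(2) gm img by simp
    show "\<forall>x\<in>vertices F. \<forall>y\<in>vertices F. prefix ((th s G \<circ> \<theta>) x) ((th s G \<circ> \<theta>) y) \<longrightarrow> prefix x y"
      using th(3) gr img by simp
  qed
qed

lemma snoc_le: "(s::nat list) \<le> s @ [k]" by (rule prefix_le) simp

lemma dir2:
  assumes "bij_betw \<theta> (vertices F) (vertices G)"
   "\<forall>x\<in>vertices F. \<forall>y\<in>vertices F. x \<le> y \<longrightarrow> \<theta> x \<le> \<theta> y"
   "\<forall>x\<in>vertices F. \<forall>y\<in>vertices F. prefix (\<theta> x) (\<theta> y) \<longrightarrow> prefix x y"
  shows "transform\<^sup>*\<^sup>* F G"
  using assms
proof (induction "card (PP F)" arbitrary: F \<theta> rule: less_induct)
  case less
  have bij: "bij_betw \<theta> (vertices F) (vertices G)" by fact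
  have mono': "is_vertex F x \<Longrightarrow> is_vertex F y \<Longrightarrow> x \<le> y \<Longrightarrow> \<theta> x \<le> \<theta> y" for x y
    using less.prems(2) by (auto simp: vertices_def)
  have refl': "is_vertex F x \<Longrightarrow> is_vertex F y \<Longrightarrow> prefix (\<theta> x) (\<theta> y) \<Longrightarrow> prefix x y" for x y
    using less.prems(3) by (auto simp: vertices_def)
  show ?case
  proof (cases "\<exists>s k. s \<noteq> [] \<and> is_vertex F (s@[k]) \<and> \<not> prefix (\<theta> s) (\<theta> (s@[k]))")
    case True
    then obtain s k0 where s: "s \<noteq> []" "is_vertex F (s@[k0])" "\<not> prefix (\<theta> s) (\<theta> (s@[k0]))" by blast
    have vs: "is_vertex F s" using vertex_parent s by blast
    define K where "K = {k. is_vertex F (s@[k]) \<and> \<not> prefix (\<theta> s) (\<theta> (s@[k]))}"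
    have finK: "finite K"
    proof (rule finite_subset)
      show "K \<subseteq> {..<length (children (node F s))}" using vertex_snoc[OF s(1)] by (auto simp: K_def)
    qed simp
    have k0K: "k0 \<in> K" using s by (simp add: K_def)
    define k where "k = Max K"
    have kK: "k \<in> K" using finK k0K k_def Max_in by blast
    then have vk: "is_vertex F (s@[k])" and nk: "\<not> prefix (\<theta> s) (\<theta> (s@[k]))" by (auto simp: K_def)
    have nSk: "\<not> is_vertex F (s@[Suc k])"
    proof
      assume v: "is_vertex F (s@[Suc k])"
      have "Suc k \<notin> K"
      proof
        assume "Suc k \<in> K"
        then have "Suc k \<le> k" using Max_ge[OF finK] k_def by simp
        then show False by simp
      qed
      then have p: "prefix (\<theta> s) (\<theta> (s@[Suc k]))" using v by (simp add: K_def)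
      have "\<theta> s \<le> \<theta> (s@[k])" using mono'[OF vs vk] snoc_le by simp
      moreover have "\<theta> (s@[k]) \<le> \<theta> (s@[Suc k])" using mono'[OF vk v] snoc_less[of k "Suc k" s] by simp
      ultimately have "prefix (\<theta> s) (\<theta> (s@[k]))" using convex p by simp
      then show False using nk by simp
    qed
    have len: "length (children (node F s)) = Suc k"
      using vertex_snoc[OF s(1), of F k] vertex_snoc[OF s(1), of F "Suc k"] vk nSk by simp
    define F' where "F' = mv s F"
    define \<phi> where "\<phi> = th s F"
    have ne: "children (node F s) \<noteq> []" using len by auto
    have g: "good F F' \<phi> s (s@[k])" and tr: "transform F F'"
      using mv_good[OF vs ne] len by (simp_all add: F'_def \<phi>_def)
    have gb: "bij_betw \<phi> (vertices F) (vertices F')"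
      and gm: "\<forall>x\<in>vertices F. \<forall>y\<in>vertices F. x \<le> y \<longrightarrow> \<phi> x \<le> \<phi> y"
      and gr: "\<forall>x\<in>vertices F. \<forall>y\<in>vertices F. prefix (\<phi> x) (\<phi> y) \<longrightarrow> prefix x y"
      and gp: "\<forall>x\<in>vertices F. \<forall>y\<in>vertices F. prefix x y \<longrightarrow> prefix (\<phi> x) (\<phi> y) \<or> (x = s \<and> prefix (s@[k]) y)"
      and gn: "\<not> prefix (\<phi> s) (\<phi> (s@[k]))"
      using g unfolding good_def by simp_all
    have gm': "x \<in> vertices F \<Longrightarrow> y \<in> vertices F \<Longrightarrow> x \<le> y \<Longrightarrow> \<phi> x \<le> \<phi> y" for x y using gm by blast
    have gr': "x \<in> vertices F \<Longrightarrow> y \<in> vertices F \<Longrightarrow> prefix (\<phi> x) (\<phi> y) \<Longrightarrow> prefix x y" for x y using gr by blast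
    have gp': "x \<in> vertices F \<Longrightarrow> y \<in> vertices F \<Longrightarrow> prefix x y \<Longrightarrow> prefix (\<phi> x) (\<phi> y) \<or> (x = s \<and> prefix (s@[k]) y)" for x y using gp by blast
    define \<psi> where "\<psi> = inv_into (vertices F) \<phi>"
    have psiV: "x' \<in> vertices F' \<Longrightarrow> \<psi> x' \<in> vertices F \<and> \<phi> (\<psi> x') = x'" for x'
    proof
      assume x': "x' \<in> vertices F'"
      have "\<phi> ` vertices F = vertices F'" using gb by (rule bij_betw_imp_surj_on)
      then show "\<psi> x' \<in> vertices F" using x' unfolding \<psi>_def by (metis inv_into_into)
      show "\<phi> (\<psi> x') = x'" using bij_betw_inv_into_right[OF gb x'] unfolding \<psi>_def .
    qed
    have psiB: "bij_betw \<psi> (vertices F') (vertices F)" using gb unfolding \<psi>_def by (rule bij_betw_inv_into)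
    have injphi: "x \<in> vertices F \<Longrightarrow> y \<in> vertices F \<Longrightarrow> \<phi> x = \<phi> y \<Longrightarrow> x = y" for x y
      using gb unfolding bij_betw_def inj_on_def by blast
    define \<theta>' where "\<theta>' = \<theta> \<circ> \<psi>"
    have B': "bij_betw \<theta>' (vertices F') (vertices G)" unfolding \<theta>'_def using bij_betw_trans[OF psiB bij] .
    have M': "\<forall>x\<in>vertices F'. \<forall>y\<in>vertices F'. x \<le> y \<longrightarrow> \<theta>' x \<le> \<theta>' y"
    proof (intro ballI impI)
      fix x' y' assume a: "x' \<in> vertices F'" "y' \<in> vertices F'" "x' \<le> y'"
      define x y where "x = \<psi> x'" and "y = \<psi> y'"
      have xv: "x \<in> vertices F" "\<phi> x = x'" "y \<in> vertices F" "\<phi> y = y'" using psiV a x_def y_def by auto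
      have "x \<le> y"
      proof (rule ccontr)
        assume "\<not> x \<le> y"
        then have "y \<le> x" "y \<noteq> x" by auto
        then have "y' \<le> x'" using gm'[OF xv(3) xv(1)] xv by simp
        then have "x' = y'" using a by simp
        then show False using injphi[OF xv(1) xv(3)] xv \<open>y \<noteq> x\<close> by simp
      qed
      then show "\<theta>' x' \<le> \<theta>' y'" using less.prems(2) xv x_def y_def \<theta>'_def by simp
    qed
    have R': "\<forall>x\<in>vertices F'. \<forall>y\<in>vertices F'. prefix (\<theta>' x) (\<theta>' y) \<longrightarrow> prefix x y"
    proof (intro ballI impI)
      fix x' y' assume a: "x' \<in> vertices F'" "y' \<in> vertices F'" "prefix (\<theta>' x') (\<theta>' y')"
      define x y where "x = \<psi> x'" and "y = \<psi> y'"
      have xv: "x \<in> vertices F" "\<phi> x = x'" "y \<in> vertices F" "\<phi> y = y'" using psiV a x_def y_def by auto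
      have pt: "prefix (\<theta> x) (\<theta> y)" using a(3) x_def y_def \<theta>'_def by simp
      then have "prefix x y" using less.prems(3) xv by blast
      then have "prefix x' y' \<or> (x = s \<and> prefix (s@[k]) y)" using gp'[OF xv(1) xv(3)] xv by simp
      moreover have "\<not> (x = s \<and> prefix (s@[k]) y)"
      proof
        assume b: "x = s \<and> prefix (s@[k]) y"
        have yv: "is_vertex F y" using xv by (simp add: vertices_def)
        have "\<theta> s \<le> \<theta> (s@[k])" using mono'[OF vs vk] snoc_le by simp
        moreover have "\<theta> (s@[k]) \<le> \<theta> y" using mono'[OF vk yv] prefix_le b by simp
        ultimately have "prefix (\<theta> s) (\<theta> (s@[k]))" using convex pt b by simp
        then show False using nk by simp
      qed
      ultimately show "prefix x' y'" by blast
    qed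
    have vsF: "s \<in> vertices F" "s@[k] \<in> vertices F" using vs vk by (auto simp: vertices_def)
    have "card (PP F') < card (PP F)"
    proof -
      have "PP F' \<subseteq> (\<lambda>(x,y). (\<phi> x, \<phi> y)) ` (PP F - {(s, s@[k])})"
      proof
        fix pr assume "pr \<in> PP F'"
        then obtain x' y' where pr: "pr = (x',y')" "x' \<in> vertices F'" "y' \<in> vertices F'" "prefix x' y'"
          by (auto simp: PP_def)
        define x y where "x = \<psi> x'" and "y = \<psi> y'"
        have xv: "x \<in> vertices F" "\<phi> x = x'" "y \<in> vertices F" "\<phi> y = y'" using psiV pr x_def y_def by auto
        have "prefix x y" using gr'[OF xv(1) xv(3)] xv pr by simp
        moreover have "(x,y) \<noteq> (s, s@[k])" using gn xv pr by auto
        ultimately show "pr \<in> (\<lambda>(x,y). (\<phi> x, \<phi> y)) ` (PP F - {(s, s@[k])})"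
          using xv pr by (auto simp: PP_def image_iff intro!: bexI[of _ "(x,y)"])
      qed
      then have "card (PP F') \<le> card ((\<lambda>(x,y). (\<phi> x, \<phi> y)) ` (PP F - {(s, s@[k])}))"
        using finite_PP by (intro card_mono) auto
      also have "\<dots> \<le> card (PP F - {(s, s@[k])})" using finite_PP by (intro card_image_le) auto
      also have "\<dots> < card (PP F)" using vsF finite_PP by (intro card_Diff1_less) (auto simp: PP_def)
      finally show ?thesis .
    qed
    then have "transform\<^sup>*\<^sup>* F' G" by (rule less.hyps[OF _ B' M' R'])
    then show ?thesis using tr by (meson converse_rtranclp_into_rtranclp)
  next
    case False
    then have edge: "s \<noteq> [] \<Longrightarrow> is_vertex F (s@[k]) \<Longrightarrow> prefix (\<theta> s) (\<theta> (s@[k]))" for s k by blast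
    have pw: "is_vertex F x \<Longrightarrow> is_vertex F (x@w) \<Longrightarrow> prefix (\<theta> x) (\<theta> (x@w))" for x w
    proof (induction w rule: rev_induct)
      case Nil then show ?case by simp
    next
      case (snoc a w)
      have xne: "x \<noteq> []" using snoc.prems by auto
      have v: "is_vertex F (x@w)" using vertex_parent[of F "x@w" a] snoc.prems xne by simp
      have "prefix (\<theta> x) (\<theta> (x@w))" using snoc.IH snoc.prems(1) v by simp
      moreover have "prefix (\<theta> (x@w)) (\<theta> (x@w@[a]))" using edge[of "x@w" a] snoc.prems xne by simp
      ultimately show ?case by (simp add: prefix_order.trans)
    qed
    have pres: "\<forall>x\<in>vertices F. \<forall>y\<in>vertices F. prefix x y \<longrightarrow> prefix (\<theta> x) (\<theta> y)"
      using pw by (auto simp: vertices_def prefix_def)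
    have id: "\<forall>x\<in>vertices F. \<theta> x = x" using iso_id[OF bij less.prems(2) pres less.prems(3)] .
    have "vertices G = \<theta> ` vertices F" using bij by (simp add: bij_betw_def)
    also have "\<dots> = vertices F" using id by simp
    finally have "F = G" using vertices_inj[of F G] by simp
    then show ?thesis by simp
  qed
qed


theorem proposition20:
  fixes F G :: pforest and n :: nat
  assumes "card (vertices F) = n" and "card (vertices G) = n"
  shows "forest_le F G \<longleftrightarrow> transform\<^sup>*\<^sup>* F G"
proof
  assume "forest_le F G"
  then obtain \<theta> where b: "bij_betw \<theta> (vertices F) (vertices G)"
    and m: "\<forall>x\<in>vertices F. \<forall>y\<in>vertices F. tot_le x y \<longrightarrow> tot_le (\<theta> x) (\<theta> y)"
    and r: "\<forall>x\<in>vertices F. \<forall>y\<in>vertices F. h_le (\<theta> x) (\<theta> y) \<longrightarrow> h_le x y"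
    unfolding forest_le_def by auto
  have m': "\<forall>x\<in>vertices F. \<forall>y\<in>vertices F. x \<le> y \<longrightarrow> \<theta> x \<le> \<theta> y"
    using m by (simp add: tot_le_iff)
  have r': "\<forall>x\<in>vertices F. \<forall>y\<in>vertices F. prefix (\<theta> x) (\<theta> y) \<longrightarrow> prefix x y"
    using r by (simp add: h_le_def)
  show "transform\<^sup>*\<^sup>* F G" using dir2[OF b m' r'] .
next
  assume "transform\<^sup>*\<^sup>* F G"
  from dir1[OF this] obtain \<theta> where b: "bij_betw \<theta> (vertices F) (vertices G)"
    and m: "\<forall>x\<in>vertices F. \<forall>y\<in>vertices F. x \<le> y \<longrightarrow> \<theta> x \<le> \<theta> y"
    and r: "\<forall>x\<in>vertices F. \<forall>y\<in>vertices F. prefix (\<theta> x) (\<theta> y) \<longrightarrow> prefix x y"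
    by blast
  have c: "card (vertices F) = card (vertices G)" using b by (rule bij_betw_same_card)
  have m': "\<forall>x\<in>vertices F. \<forall>y\<in>vertices F. tot_le x y \<longrightarrow> tot_le (\<theta> x) (\<theta> y)"
    using m by (simp add: tot_le_iff)
  have r': "\<forall>x\<in>vertices F. \<forall>y\<in>vertices F. h_le (\<theta> x) (\<theta> y) \<longrightarrow> h_le x y"
    using r by (simp add: h_le_def)
  show "forest_le F G" unfolding forest_le_def using c b m' r' by blast
qed

end
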